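(* Let $U=(U_{ij})_{i,j=1}^M$ with $U_{ij}\in M_M(\mathbb C)$ and $V=(V_{ab})_{a,b=1}^N$ with $V_{ab}\in M_N(\mathbb C)$ be projective models, and let $Q\in M_{M\times N}(\mathbb T)$ be arbitrary. Then the matrix $W=U\otimes_QV$, given by $$(W_{ia,jb})_{kc,ld}=\frac{Q_{ic}Q_{jd}}{Q_{id}Q_{jc}}(U_{ij})_{kl}(V_{ab})_{cd},$$ is a projective model, i.e. both $W$ and $W'$ are magic.
   Context: A square matrix with entries in a $C^*$-algebra is magic if its entries are orthogonal projections and each row and each column sums to $1$. For $U=(U_{ij})_{i,j=1}^n$ with $U_{ij}\in M_n(\mathbb C)$, $U'$ is defined by $(U'_{kl})_{ij}=(U_{ij})_{kl}$. $U$ is a projective model if $U$ and $U'$ are both magic. In the formula, $i,j,k,l\in\{1,\dots,M\}$, $a,b,c,d\in\{1,\dots,N\}$, and $W$ is the $MN\times MN$ matrix with entries $W_{ia,jb}\in M_{MN}(\mathbb C)$. *)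

theory Defs
  imports "HOL-Analysis.Analysis"
begin

text \<open>Square complex matrices indexed by a finite set K are represented as functions
  K \<Rightarrow> K \<Rightarrow> complex (values outside K are irrelevant).\<close>

definition mat_mult :: "'k set \<Rightarrow> ('k \<Rightarrow> 'k \<Rightarrow> complex) \<Rightarrow> ('k \<Rightarrow> 'k \<Rightarrow> complex) \<Rightarrow> ('k \<Rightarrow> 'k \<Rightarrow> complex)" where
  "mat_mult K A B = (\<lambda>k l. \<Sum>m\<in>K. A k m * B m l)"

definition mat_id :: "'k \<Rightarrow> 'k \<Rightarrow> complex" where
  "mat_id = (\<lambda>k l. if k = l then 1 else 0)"

definition is_proj :: "'k set \<Rightarrow> ('k \<Rightarrow> 'k \<Rightarrow> complex) \<Rightarrow> bool" where
  "is_proj K P \<longleftrightarrow>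
     (\<forall>k\<in>K. \<forall>l\<in>K. mat_mult K P P k l = P k l) \<and>
     (\<forall>k\<in>K. \<forall>l\<in>K. cnj (P l k) = P k l)"

definition magic :: "'i set \<Rightarrow> 'k set \<Rightarrow> ('i \<Rightarrow> 'i \<Rightarrow> 'k \<Rightarrow> 'k \<Rightarrow> complex) \<Rightarrow> bool" where
  "magic I K U \<longleftrightarrow>
     (\<forall>i\<in>I. \<forall>j\<in>I. is_proj K (U i j)) \<and>
     (\<forall>i\<in>I. \<forall>k\<in>K. \<forall>l\<in>K. (\<Sum>j\<in>I. U i j k l) = mat_id k l) \<and>
     (\<forall>j\<in>I. \<forall>k\<in>K. \<forall>l\<in>K. (\<Sum>i\<in>I. U i j k l) = mat_id k l)"

definition prime_swap :: "('i \<Rightarrow> 'i \<Rightarrow> 'i \<Rightarrow> 'i \<Rightarrow> complex) \<Rightarrow> ('i \<Rightarrow> 'i \<Rightarrow> 'i \<Rightarrow> 'i \<Rightarrow> complex)" where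
  "prime_swap U = (\<lambda>k l i j. U i j k l)"

definition projective_model :: "'i set \<Rightarrow> ('i \<Rightarrow> 'i \<Rightarrow> 'i \<Rightarrow> 'i \<Rightarrow> complex) \<Rightarrow> bool" where
  "projective_model I U \<longleftrightarrow> magic I I U \<and> magic I I (prime_swap U)"

definition twisted_tensor ::
  "('i \<Rightarrow> 'a \<Rightarrow> complex) \<Rightarrow> ('i \<Rightarrow> 'i \<Rightarrow> 'i \<Rightarrow> 'i \<Rightarrow> complex) \<Rightarrow> ('a \<Rightarrow> 'a \<Rightarrow> 'a \<Rightarrow> 'a \<Rightarrow> complex)
   \<Rightarrow> ('i \<times> 'a \<Rightarrow> 'i \<times> 'a \<Rightarrow> 'i \<times> 'a \<Rightarrow> 'i \<times> 'a \<Rightarrow> complex)" where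
  "twisted_tensor Q U V = (\<lambda>(i,a) (j,b) (k,c) (l,d).
      Q i c * Q j d / (Q i d * Q j c) * U i j k l * V a b c d)"

end

theory Submission
  imports Defs
begin

definition tf :: "(nat \<Rightarrow> nat \<Rightarrow> complex) \<Rightarrow> nat \<Rightarrow> nat \<Rightarrow> nat \<Rightarrow> nat \<Rightarrow> complex" where
  "tf Q i j c d = Q i c * Q j d / (Q i d * Q j c)"

lemma tt_eq: "twisted_tensor Q U V (i,a) (j,b) (k,c) (l,d) = tf Q i j c d * U i j k l * V a b c d"
  by (simp add: twisted_tensor_def tf_def)

lemma sum_pair: "sum h (A \<times> B) = (\<Sum>m\<in>A. \<Sum>e\<in>B. h (m,e))"
  by (simp add: sum.cartesian_product)

lemma cnj_unit: "cmod z = 1 \<Longrightarrow> cnj z = inverse z"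
proof -
  assume "cmod z = 1"
  then have "z * cnj z = 1" using complex_norm_square[of z] by simp
  then show ?thesis by (metis inverse_unique)
qed

locale twq =
  fixes Q :: "nat \<Rightarrow> nat \<Rightarrow> complex" and I J :: "nat set"
  assumes hQ: "\<forall>i\<in>I. \<forall>c\<in>J. cmod (Q i c) = 1"
begin

lemma nz: "i \<in> I \<Longrightarrow> c \<in> J \<Longrightarrow> Q i c \<noteq> 0"
  using hQ by force

lemma cj: "i \<in> I \<Longrightarrow> c \<in> J \<Longrightarrow> cnj (Q i c) = inverse (Q i c)"
  using hQ cnj_unit by blast

lemma F1: "i \<in> I \<Longrightarrow> j \<in> I \<Longrightarrow> c \<in> J \<Longrightarrow> d \<in> J \<Longrightarrow> e \<in> J \<Longrightarrow>
   tf Q i j c e * tf Q i j e d = tf Q i j c d"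
  using nz[of i c] nz[of i d] nz[of i e] nz[of j c] nz[of j d] nz[of j e]
  by (simp add: tf_def field_simps)

lemma F2: "i \<in> I \<Longrightarrow> j \<in> I \<Longrightarrow> m \<in> I \<Longrightarrow> c \<in> J \<Longrightarrow> d \<in> J \<Longrightarrow>
   tf Q i m c d * tf Q m j c d = tf Q i j c d"
  using nz[of i c] nz[of i d] nz[of m c] nz[of m d] nz[of j c] nz[of j d]
  by (simp add: tf_def field_simps)

lemma F3: "i \<in> I \<Longrightarrow> j \<in> I \<Longrightarrow> c \<in> J \<Longrightarrow> d \<in> J \<Longrightarrow> cnj (tf Q i j d c) = tf Q i j c d"
  using nz[of i c] nz[of i d] nz[of j c] nz[of j d] cj[of i c] cj[of i d] cj[of j c] cj[of j d]
  by (simp add: tf_def field_simps)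

lemma F4: "i \<in> I \<Longrightarrow> j \<in> I \<Longrightarrow> c \<in> J \<Longrightarrow> d \<in> J \<Longrightarrow> cnj (tf Q j i c d) = tf Q i j c d"
  using nz[of i c] nz[of i d] nz[of j c] nz[of j d] cj[of i c] cj[of i d] cj[of j c] cj[of j d]
  by (simp add: tf_def field_simps)

lemma F5: "i \<in> I \<Longrightarrow> j \<in> I \<Longrightarrow> c \<in> J \<Longrightarrow> tf Q i j c c = 1"
  using nz[of i c] nz[of j c] by (simp add: tf_def)

lemma F6: "i \<in> I \<Longrightarrow> c \<in> J \<Longrightarrow> d \<in> J \<Longrightarrow> tf Q i i c d = 1"
  using nz[of i c] nz[of i d] by (simp add: tf_def)

lemma mid_pair: "mat_id (k,c) (l,d) = mat_id k l * mat_id c d"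
  by (simp add: mat_id_def)

lemma W_proj:
  assumes fI: "finite I" and fJ: "finite J"
    and U: "magic I I U" and V: "magic J J V"
    and i: "i \<in> I" and j: "j \<in> I" and a: "a \<in> J" and b: "b \<in> J"
  shows "is_proj (I \<times> J) (twisted_tensor Q U V (i,a) (j,b))"
proof -
  have PU: "is_proj I (U i j)" using U i j by (simp add: magic_def)
  have PV: "is_proj J (V a b)" using V a b by (simp add: magic_def)
  have mm: "mat_mult (I \<times> J) (twisted_tensor Q U V (i,a) (j,b)) (twisted_tensor Q U V (i,a) (j,b)) (k,c) (l,d)
      = twisted_tensor Q U V (i,a) (j,b) (k,c) (l,d)"
    if k: "k \<in> I" and l: "l \<in> I" and c: "c \<in> J" and d: "d \<in> J" for k l c d
  proof -
    have "mat_mult (I \<times> J) (twisted_tensor Q U V (i,a) (j,b)) (twisted_tensor Q U V (i,a) (j,b)) (k,c) (l,d)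
       = (\<Sum>m\<in>I. \<Sum>e\<in>J. (tf Q i j c e * U i j k m * V a b c e) * (tf Q i j e d * U i j m l * V a b e d))"
      by (simp add: mat_mult_def sum_pair tt_eq)
    also have "\<dots> = (\<Sum>m\<in>I. \<Sum>e\<in>J. tf Q i j c d * ((U i j k m * U i j m l) * (V a b c e * V a b e d)))"
    proof (intro sum.cong refl)
      fix m e assume "m \<in> I" "e \<in> J"
      then have "tf Q i j c e * tf Q i j e d = tf Q i j c d" using F1 i j c d by blast
      then show "(tf Q i j c e * U i j k m * V a b c e) * (tf Q i j e d * U i j m l * V a b e d)
          = tf Q i j c d * ((U i j k m * U i j m l) * (V a b c e * V a b e d))"
      proof -
        have "(tf Q i j c e * U i j k m * V a b c e) * (tf Q i j e d * U i j m l * V a b e d)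
          = (tf Q i j c e * tf Q i j e d) * ((U i j k m * U i j m l) * (V a b c e * V a b e d))"
          by (simp only: mult_ac)
        then show ?thesis using \<open>tf Q i j c e * tf Q i j e d = tf Q i j c d\<close> by simp
      qed
    qed
    also have "\<dots> = tf Q i j c d * ((\<Sum>m\<in>I. U i j k m * U i j m l) * (\<Sum>e\<in>J. V a b c e * V a b e d))"
      using sum_product[of "\<lambda>m. U i j k m * U i j m l" I "\<lambda>e. V a b c e * V a b e d" J]
      by (simp add: sum_distrib_left)
    also have "\<dots> = tf Q i j c d * (U i j k l * V a b c d)"
      using PU PV k l c d by (simp add: is_proj_def mat_mult_def)
    finally show ?thesis by (simp add: tt_eq mult.assoc)
  qed
  have sa: "cnj (twisted_tensor Q U V (i,a) (j,b) (l,d) (k,c)) = twisted_tensor Q U V (i,a) (j,b) (k,c) (l,d)"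
    if k: "k \<in> I" and l: "l \<in> I" and c: "c \<in> J" and d: "d \<in> J" for k l c d
    using PU PV k l c d F3[OF i j c d] by (simp add: is_proj_def tt_eq)
  show ?thesis unfolding is_proj_def using mm sa by auto
qed

lemma W_row:
  assumes fI: "finite I" and fJ: "finite J"
    and U: "magic I I U" and V: "magic J J V"
    and i: "i \<in> I" and a: "a \<in> J" and k: "k \<in> I" and l: "l \<in> I" and c: "c \<in> J" and d: "d \<in> J"
  shows "(\<Sum>x\<in>I \<times> J. twisted_tensor Q U V (i,a) x (k,c) (l,d)) = mat_id (k,c) (l,d)"
proof -
  have "(\<Sum>x\<in>I \<times> J. twisted_tensor Q U V (i,a) x (k,c) (l,d))
      = (\<Sum>j\<in>I. tf Q i j c d * U i j k l * (\<Sum>b\<in>J. V a b c d))"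
    by (simp add: sum_pair tt_eq sum_distrib_left)
  also have "\<dots> = (\<Sum>j\<in>I. tf Q i j c d * U i j k l * mat_id c d)"
    using V a c d by (simp add: magic_def)
  also have "\<dots> = (\<Sum>j\<in>I. U i j k l) * mat_id c d"
    unfolding sum_distrib_right
  proof (intro sum.cong refl)
    fix j assume "j \<in> I"
    then show "tf Q i j c d * U i j k l * mat_id c d = U i j k l * mat_id c d"
      using F5[OF i _ c] by (cases "c = d") (auto simp: mat_id_def)
  qed
  also have "\<dots> = mat_id k l * mat_id c d" using U i k l by (simp add: magic_def)
  finally show ?thesis by (simp add: mid_pair)
qed

lemma W_col:
  assumes fI: "finite I" and fJ: "finite J"
    and U: "magic I I U" and V: "magic J J V"
    and j: "j \<in> I" and b: "b \<in> J" and k: "k \<in> I" and l: "l \<in> I" and c: "c \<in> J" and d: "d \<in> J"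
  shows "(\<Sum>x\<in>I \<times> J. twisted_tensor Q U V x (j,b) (k,c) (l,d)) = mat_id (k,c) (l,d)"
proof -
  have "(\<Sum>x\<in>I \<times> J. twisted_tensor Q U V x (j,b) (k,c) (l,d))
      = (\<Sum>i\<in>I. tf Q i j c d * U i j k l * (\<Sum>a\<in>J. V a b c d))"
    by (simp add: sum_pair tt_eq sum_distrib_left)
  also have "\<dots> = (\<Sum>i\<in>I. tf Q i j c d * U i j k l * mat_id c d)"
    using V b c d by (simp add: magic_def)
  also have "\<dots> = (\<Sum>i\<in>I. U i j k l) * mat_id c d"
    unfolding sum_distrib_right
  proof (intro sum.cong refl)
    fix i assume "i \<in> I"
    then show "tf Q i j c d * U i j k l * mat_id c d = U i j k l * mat_id c d"
      using F5[OF _ j c] by (cases "c = d") (auto simp: mat_id_def)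
  qed
  also have "\<dots> = mat_id k l * mat_id c d" using U j k l by (simp add: magic_def)
  finally show ?thesis by (simp add: mid_pair)
qed

lemma W_magic:
  assumes fI: "finite I" and fJ: "finite J"
    and U: "magic I I U" and V: "magic J J V"
  shows "magic (I \<times> J) (I \<times> J) (twisted_tensor Q U V)"
  unfolding magic_def
proof (intro conjI ballI)
  fix x y assume "x \<in> I \<times> J" "y \<in> I \<times> J"
  then show "is_proj (I \<times> J) (twisted_tensor Q U V x y)"
    using W_proj[OF assms] by (cases x; cases y) auto
next
  fix x y z assume "x \<in> I \<times> J" "y \<in> I \<times> J" "z \<in> I \<times> J"
  then show "(\<Sum>j\<in>I \<times> J. twisted_tensor Q U V x j y z) = mat_id y z"
    using W_row[OF assms] by (cases x; cases y; cases z) auto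
next
  fix x y z assume "x \<in> I \<times> J" "y \<in> I \<times> J" "z \<in> I \<times> J"
  then show "(\<Sum>i\<in>I \<times> J. twisted_tensor Q U V i x y z) = mat_id y z"
    using W_col[OF assms] by (cases x; cases y; cases z) auto
qed


lemma ps_eq: "prime_swap (twisted_tensor Q U V) (k,c) (l,d) (i,a) (j,b) = tf Q i j c d * U i j k l * V a b c d"
  by (simp add: prime_swap_def tt_eq)

lemma P_proj:
  assumes fI: "finite I" and fJ: "finite J"
    and U: "magic I I (prime_swap U)" and V: "magic J J (prime_swap V)"
    and k: "k \<in> I" and l: "l \<in> I" and c: "c \<in> J" and d: "d \<in> J"
  shows "is_proj (I \<times> J) (prime_swap (twisted_tensor Q U V) (k,c) (l,d))"
proof -
  have PU: "is_proj I (prime_swap U k l)" using U k l by (simp add: magic_def)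
  have PV: "is_proj J (prime_swap V c d)" using V c d by (simp add: magic_def)
  have mm: "mat_mult (I \<times> J) (prime_swap (twisted_tensor Q U V) (k,c) (l,d)) (prime_swap (twisted_tensor Q U V) (k,c) (l,d)) (i,a) (j,b)
      = prime_swap (twisted_tensor Q U V) (k,c) (l,d) (i,a) (j,b)"
    if i: "i \<in> I" and j: "j \<in> I" and a: "a \<in> J" and b: "b \<in> J" for i j a b
  proof -
    have "mat_mult (I \<times> J) (prime_swap (twisted_tensor Q U V) (k,c) (l,d)) (prime_swap (twisted_tensor Q U V) (k,c) (l,d)) (i,a) (j,b)
       = (\<Sum>m\<in>I. \<Sum>e\<in>J. (tf Q i m c d * U i m k l * V a e c d) * (tf Q m j c d * U m j k l * V e b c d))"
      by (simp add: mat_mult_def sum_pair ps_eq)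
    also have "\<dots> = (\<Sum>m\<in>I. \<Sum>e\<in>J. tf Q i j c d * ((U i m k l * U m j k l) * (V a e c d * V e b c d)))"
    proof (intro sum.cong refl)
      fix m e assume "m \<in> I" "e \<in> J"
      then have "tf Q i m c d * tf Q m j c d = tf Q i j c d" using F2 i j c d by blast
      then show "(tf Q i m c d * U i m k l * V a e c d) * (tf Q m j c d * U m j k l * V e b c d)
          = tf Q i j c d * ((U i m k l * U m j k l) * (V a e c d * V e b c d))"
      proof -
        have "(tf Q i m c d * U i m k l * V a e c d) * (tf Q m j c d * U m j k l * V e b c d)
          = (tf Q i m c d * tf Q m j c d) * ((U i m k l * U m j k l) * (V a e c d * V e b c d))"
          by (simp only: mult_ac)
        then show ?thesis using \<open>tf Q i m c d * tf Q m j c d = tf Q i j c d\<close> by simp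
      qed
    qed
    also have "\<dots> = tf Q i j c d * ((\<Sum>m\<in>I. U i m k l * U m j k l) * (\<Sum>e\<in>J. V a e c d * V e b c d))"
      using sum_product[of "\<lambda>m. U i m k l * U m j k l" I "\<lambda>e. V a e c d * V e b c d" J]
      by (simp add: sum_distrib_left)
    also have "\<dots> = tf Q i j c d * (U i j k l * V a b c d)"
      using PU PV i j a b by (simp add: is_proj_def mat_mult_def prime_swap_def)
    finally show ?thesis by (simp add: ps_eq mult.assoc)
  qed
  have sa: "cnj (prime_swap (twisted_tensor Q U V) (k,c) (l,d) (j,b) (i,a)) = prime_swap (twisted_tensor Q U V) (k,c) (l,d) (i,a) (j,b)"
    if i: "i \<in> I" and j: "j \<in> I" and a: "a \<in> J" and b: "b \<in> J" for i j a b
    using PU PV i j a b F4[OF i j c d] by (simp add: is_proj_def prime_swap_def tt_eq)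
  show ?thesis unfolding is_proj_def using mm sa by auto
qed

lemma P_row:
  assumes fI: "finite I" and fJ: "finite J"
    and U: "magic I I (prime_swap U)" and V: "magic J J (prime_swap V)"
    and k: "k \<in> I" and c: "c \<in> J" and i: "i \<in> I" and j: "j \<in> I" and a: "a \<in> J" and b: "b \<in> J"
  shows "(\<Sum>x\<in>I \<times> J. prime_swap (twisted_tensor Q U V) (k,c) x (i,a) (j,b)) = mat_id (i,a) (j,b)"
proof -
  have "(\<Sum>x\<in>I \<times> J. prime_swap (twisted_tensor Q U V) (k,c) x (i,a) (j,b))
      = (\<Sum>d\<in>J. tf Q i j c d * V a b c d * (\<Sum>l\<in>I. U i j k l))"
  proof -
    have "(\<Sum>x\<in>I \<times> J. prime_swap (twisted_tensor Q U V) (k,c) x (i,a) (j,b))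
       = (\<Sum>l\<in>I. \<Sum>d\<in>J. tf Q i j c d * U i j k l * V a b c d)"
      by (simp add: sum_pair ps_eq)
    also have "\<dots> = (\<Sum>d\<in>J. \<Sum>l\<in>I. tf Q i j c d * U i j k l * V a b c d)"
      by (rule sum.swap)
    also have "\<dots> = (\<Sum>d\<in>J. tf Q i j c d * V a b c d * (\<Sum>l\<in>I. U i j k l))"
      unfolding sum_distrib_left by (intro sum.cong refl) (simp only: mult_ac)
    finally show ?thesis .
  qed
  also have "\<dots> = (\<Sum>d\<in>J. tf Q i j c d * V a b c d * mat_id i j)"
    using U k i j by (simp add: magic_def prime_swap_def)
  also have "\<dots> = (\<Sum>d\<in>J. V a b c d) * mat_id i j"
    unfolding sum_distrib_right
  proof (intro sum.cong refl)
    fix d assume "d \<in> J"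
    then show "tf Q i j c d * V a b c d * mat_id i j = V a b c d * mat_id i j"
      using F6[OF i c] by (cases "i = j") (auto simp: mat_id_def)
  qed
  also have "\<dots> = mat_id a b * mat_id i j" using V c a b by (simp add: magic_def prime_swap_def)
  finally show ?thesis by (simp add: mid_pair mult_ac)
qed

lemma P_col:
  assumes fI: "finite I" and fJ: "finite J"
    and U: "magic I I (prime_swap U)" and V: "magic J J (prime_swap V)"
    and l: "l \<in> I" and d: "d \<in> J" and i: "i \<in> I" and j: "j \<in> I" and a: "a \<in> J" and b: "b \<in> J"
  shows "(\<Sum>x\<in>I \<times> J. prime_swap (twisted_tensor Q U V) x (l,d) (i,a) (j,b)) = mat_id (i,a) (j,b)"
proof -
  have "(\<Sum>x\<in>I \<times> J. prime_swap (twisted_tensor Q U V) x (l,d) (i,a) (j,b))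
      = (\<Sum>c\<in>J. tf Q i j c d * V a b c d * (\<Sum>k\<in>I. U i j k l))"
  proof -
    have "(\<Sum>x\<in>I \<times> J. prime_swap (twisted_tensor Q U V) x (l,d) (i,a) (j,b))
       = (\<Sum>k\<in>I. \<Sum>c\<in>J. tf Q i j c d * U i j k l * V a b c d)"
      by (simp add: sum_pair ps_eq)
    also have "\<dots> = (\<Sum>c\<in>J. \<Sum>k\<in>I. tf Q i j c d * U i j k l * V a b c d)"
      by (rule sum.swap)
    also have "\<dots> = (\<Sum>c\<in>J. tf Q i j c d * V a b c d * (\<Sum>k\<in>I. U i j k l))"
      unfolding sum_distrib_left by (intro sum.cong refl) (simp only: mult_ac)
    finally show ?thesis .
  qed
  also have "\<dots> = (\<Sum>c\<in>J. tf Q i j c d * V a b c d * mat_id i j)"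
    using U l i j by (simp add: magic_def prime_swap_def)
  also have "\<dots> = (\<Sum>c\<in>J. V a b c d) * mat_id i j"
    unfolding sum_distrib_right
  proof (intro sum.cong refl)
    fix c assume "c \<in> J"
    then show "tf Q i j c d * V a b c d * mat_id i j = V a b c d * mat_id i j"
      using F6[OF i _ d] by (cases "i = j") (auto simp: mat_id_def)
  qed
  also have "\<dots> = mat_id a b * mat_id i j" using V d a b by (simp add: magic_def prime_swap_def)
  finally show ?thesis by (simp add: mid_pair mult_ac)
qed

lemma P_magic:
  assumes fI: "finite I" and fJ: "finite J"
    and U: "magic I I (prime_swap U)" and V: "magic J J (prime_swap V)"
  shows "magic (I \<times> J) (I \<times> J) (prime_swap (twisted_tensor Q U V))"
  unfolding magic_def
proof (intro conjI ballI)
  fix x y assume "x \<in> I \<times> J" "y \<in> I \<times> J"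
  then show "is_proj (I \<times> J) (prime_swap (twisted_tensor Q U V) x y)"
    using P_proj[OF assms] by (cases x; cases y) auto
next
  fix x y z assume "x \<in> I \<times> J" "y \<in> I \<times> J" "z \<in> I \<times> J"
  then show "(\<Sum>j\<in>I \<times> J. prime_swap (twisted_tensor Q U V) x j y z) = mat_id y z"
    using P_row[OF assms] by (cases x; cases y; cases z) auto
next
  fix x y z assume "x \<in> I \<times> J" "y \<in> I \<times> J" "z \<in> I \<times> J"
  then show "(\<Sum>i\<in>I \<times> J. prime_swap (twisted_tensor Q U V) i x y z) = mat_id y z"
    using P_col[OF assms] by (cases x; cases y; cases z) auto
qed

end

theorem proposition2p4:
  fixes M N :: nat
    and U :: "nat \<Rightarrow> nat \<Rightarrow> nat \<Rightarrow> nat \<Rightarrow> complex"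
    and V :: "nat \<Rightarrow> nat \<Rightarrow> nat \<Rightarrow> nat \<Rightarrow> complex"
    and Q :: "nat \<Rightarrow> nat \<Rightarrow> complex"
  assumes "projective_model {1..M} U"
    and "projective_model {1..N} V"
    and "\<forall>i\<in>{1..M}. \<forall>c\<in>{1..N}. cmod (Q i c) = 1"
  shows "projective_model ({1..M} \<times> {1..N}) (twisted_tensor Q U V)"
proof -
  interpret twq Q "{1..M}" "{1..N}" using assms(3) by unfold_locales
  show ?thesis using assms(1,2) W_magic P_magic by (simp add: projective_model_def)
qed

end
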